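(* Let $G$ and $H$ be graphs and $d\ge 0$ such that every vertex $v\in V(H)$ has degree at most $d$ in $H$ and degree at most $d$ in $G$. If there is a collection $\mathcal{F}$ of at least $4d+1$ linear forests covering the edges of $G$, then there is a collection of $|\mathcal{F}|$ linear forests covering the edges of $G\cup H$.
   Context: A linear forest is a graph which is a vertex-disjoint union of paths. A collection of graphs covers the edges of a graph if every edge lies in at least one graph of the collection. *)

theory Defs
  imports Main
begin

type_synonym 'a graph = "'a set \<times> 'a set set"

definition verts :: "'a graph \<Rightarrow> 'a set" where "verts G = fst G"
definition edges :: "'a graph \<Rightarrow> 'a set set" where "edges G = snd G"

definition graph :: "'a graph \<Rightarrow> bool" where
  "graph G \<longleftrightarrow> finite (verts G) \<and>
     (\<forall>e\<in>edges G. \<exists>u w. u \<noteq> w \<and> e = {u, w} \<and> u \<in> verts G \<and> w \<in> verts G)"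

definition degree :: "'a graph \<Rightarrow> 'a \<Rightarrow> nat" where
  "degree G v = card {e \<in> edges G. v \<in> e}"

definition graph_union :: "'a graph \<Rightarrow> 'a graph \<Rightarrow> 'a graph" where
  "graph_union G H = (verts G \<union> verts H, edges G \<union> edges H)"

definition path_edges :: "'a list \<Rightarrow> 'a set set" where
  "path_edges p = {{p ! i, p ! Suc i} | i. Suc i < length p}"

definition linear_forest :: "'a graph \<Rightarrow> bool" where
  "linear_forest F \<longleftrightarrow> graph F \<and>
     (\<exists>P :: 'a list set.
        (\<forall>p\<in>P. p \<noteq> [] \<and> distinct p) \<and>
        (\<forall>p\<in>P. \<forall>q\<in>P. p \<noteq> q \<longrightarrow> set p \<inter> set q = {}) \<and>
        verts F = (\<Union>p\<in>P. set p) \<and>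
        edges F = (\<Union>p\<in>P. path_edges p))"

definition covers_edges :: "nat \<Rightarrow> (nat \<Rightarrow> 'a graph) \<Rightarrow> 'a graph \<Rightarrow> bool" where
  "covers_edges k F G \<longleftrightarrow> (\<forall>e\<in>edges G. \<exists>i<k. e \<in> edges (F i))"

end

theory Submission
  imports Defs
begin

lemma graph_fin_edges: "graph G \<Longrightarrow> finite (edges G)"
proof -
  assume g: "graph G"
  have "edges G \<subseteq> Pow (verts G)" using g unfolding graph_def by fastforce
  moreover have "finite (Pow (verts G))" using g unfolding graph_def by simp
  ultimately show ?thesis by (rule finite_subset)
qed

lemma path_edges_sub: "e \<in> path_edges p \<Longrightarrow> e \<subseteq> set p"
  unfolding path_edges_def by auto

lemma path_edgesI: "Suc j < length p \<Longrightarrow> {p!j, p!Suc j} \<in> path_edges p"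
  unfolding path_edges_def by auto

lemma path_edgesE: "x \<in> path_edges p \<Longrightarrow> \<exists>j. Suc j < length p \<and> x = {p!j, p!Suc j}"
  unfolding path_edges_def by auto

lemma lfE:
  assumes "linear_forest F"
  obtains P where "graph F" "\<forall>p\<in>P. p \<noteq> [] \<and> distinct p"
    "\<forall>p\<in>P. \<forall>q\<in>P. p \<noteq> q \<longrightarrow> set p \<inter> set q = {}"
    "verts F = (\<Union>p\<in>P. set p)" "edges F = (\<Union>p\<in>P. path_edges p)"
  using assms unfolding linear_forest_def by (elim conjE exE) (rule that)

lemma path_edgesE2:
  assumes "e \<in> path_edges p"
  obtains i where "Suc i < length p" "e = {p!i, p!Suc i}"
  using path_edgesE[OF assms] by (elim conjE exE) (rule that)

lemma path_edges_split:
  assumes i: "Suc i < length p"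
  shows "path_edges p = path_edges (take (Suc i) p) \<union> {{p!i, p!Suc i}} \<union> path_edges (drop (Suc i) p)"
proof
  show "path_edges p \<subseteq> path_edges (take (Suc i) p) \<union> {{p!i, p!Suc i}} \<union> path_edges (drop (Suc i) p)"
  proof
    fix x assume "x \<in> path_edges p"
    then obtain j where j: "Suc j < length p" and x: "x = {p!j, p!Suc j}" by (rule path_edgesE2)
    consider "j < i" | "j = i" | "i < j" by (rule linorder_cases)
    then show "x \<in> path_edges (take (Suc i) p) \<union> {{p!i, p!Suc i}} \<union> path_edges (drop (Suc i) p)"
    proof cases
      case 1
      have l: "Suc j < length (take (Suc i) p)" using 1 i by simp
      have "take (Suc i) p ! j = p ! j" "take (Suc i) p ! Suc j = p ! Suc j" using 1 by simp_all
      then have "x \<in> path_edges (take (Suc i) p)" using path_edgesI[OF l] x by simp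
      then show ?thesis by blast
    next
      case 2 then show ?thesis using x by simp
    next
      case 3
      define m where "m = j - Suc i"
      have jm: "j = Suc i + m" using 3 m_def by simp
      have l: "Suc m < length (drop (Suc i) p)" using j jm by simp
      have "drop (Suc i) p ! m = p ! j" "drop (Suc i) p ! Suc m = p ! Suc j" using i jm by simp_all
      then have "x \<in> path_edges (drop (Suc i) p)" using path_edgesI[OF l] x by simp
      then show ?thesis by blast
    qed
  qed
next
  show "path_edges (take (Suc i) p) \<union> {{p!i, p!Suc i}} \<union> path_edges (drop (Suc i) p) \<subseteq> path_edges p"
  proof
    fix x assume "x \<in> path_edges (take (Suc i) p) \<union> {{p!i, p!Suc i}} \<union> path_edges (drop (Suc i) p)"
    then consider "x \<in> path_edges (take (Suc i) p)" | "x = {p!i, p!Suc i}" | "x \<in> path_edges (drop (Suc i) p)" by blast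
    then show "x \<in> path_edges p"
    proof cases
      case 1
      then obtain j where l: "Suc j < length (take (Suc i) p)" and x: "x = {take (Suc i) p ! j, take (Suc i) p ! Suc j}"
        by (rule path_edgesE2)
      have "Suc j < length p" "take (Suc i) p ! j = p ! j" "take (Suc i) p ! Suc j = p ! Suc j" using l by simp_all
      then show ?thesis using path_edgesI[of j p] x by simp
    next
      case 2 then show ?thesis using path_edgesI[OF i] by simp
    next
      case 3
      then obtain j where l: "Suc j < length (drop (Suc i) p)" and x: "x = {drop (Suc i) p ! j, drop (Suc i) p ! Suc j}"
        by (rule path_edgesE2)
      have "Suc (Suc i + j) < length p" "drop (Suc i) p ! j = p!(Suc i + j)" "drop (Suc i) p ! Suc j = p ! Suc (Suc i + j)"
        using l i by simp_all
      then show ?thesis using path_edgesI[of "Suc i + j" p] x by simp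
    qed
  qed
qed

lemma lf_remove1:
  assumes lf: "linear_forest F" and e: "e \<in> edges F"
  shows "linear_forest (verts F, edges F - {e})"
proof -
  from lf obtain P where gF: "graph F" and P1: "\<forall>p\<in>P. p \<noteq> [] \<and> distinct p"
    and P2: "\<forall>p\<in>P. \<forall>q\<in>P. p \<noteq> q \<longrightarrow> set p \<inter> set q = {}"
    and PV: "verts F = (\<Union>p\<in>P. set p)" and PE: "edges F = (\<Union>p\<in>P. path_edges p)"
    by (rule lfE)
  from e PE obtain p where pP: "p \<in> P" and ep: "e \<in> path_edges p" by auto
  obtain i where i: "Suc i < length p" and ei: "e = {p!i, p!Suc i}" using ep by (rule path_edgesE2)
  define A where "A = take (Suc i) p"
  define B where "B = drop (Suc i) p"
  have dp: "distinct p" using P1 pP by auto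
  have AB: "set A \<inter> set B = {}" unfolding A_def B_def using dp set_take_disj_set_drop_if_distinct by blast
  have Ane: "A \<noteq> []" "distinct A" "B \<noteq> []" "distinct B" using i dp unfolding A_def B_def by auto
  have pAB: "set p = set A \<union> set B" unfolding A_def B_def
    by (metis append_take_drop_id set_append)
  have sAp: "set A \<subseteq> set p" "set B \<subseteq> set p" using pAB by auto
  have piA: "p!i \<in> set A"
  proof -
    have "take (Suc i) p ! i = p ! i" by simp
    moreover have "i < length (take (Suc i) p)" using i by simp
    ultimately show ?thesis unfolding A_def by (metis nth_mem)
  qed
  have piB: "p!Suc i \<in> set B"
  proof -
    have "drop (Suc i) p ! 0 = p ! Suc i" using i by simp
    moreover have "0 < length (drop (Suc i) p)" using i by simp
    ultimately show ?thesis unfolding B_def by (metis nth_mem)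
  qed
  have split: "path_edges p = path_edges A \<union> {e} \<union> path_edges B"
    unfolding A_def B_def ei using path_edges_split[OF i] .
  have eA: "e \<notin> path_edges A" using path_edges_sub[of e A] piB AB ei by auto
  have eB: "e \<notin> path_edges B" using path_edges_sub[of e B] piA AB ei by auto
  have eq: "e \<notin> path_edges q" if "q \<in> P" "q \<noteq> p" for q
    using path_edges_sub[of e q] P2 that pP ei piA sAp by blast
  define P' where "P' = (P - {p}) \<union> {A, B}"
  show ?thesis unfolding linear_forest_def
  proof (intro conjI exI[of _ P'])
    show "graph (verts F, edges F - {e})" using gF unfolding graph_def verts_def edges_def by auto
    show "\<forall>p\<in>P'. p \<noteq> [] \<and> distinct p" using P1 Ane unfolding P'_def by auto
    show "\<forall>x\<in>P'. \<forall>y\<in>P'. x \<noteq> y \<longrightarrow> set x \<inter> set y = {}"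
    proof (intro ballI impI)
      fix x y assume x: "x \<in> P'" and y: "y \<in> P'" and xy: "x \<noteq> y"
      have dx: "set x \<inter> set p = {}" if "x \<in> P - {p}" for x using P2 that pP by blast
      from x y xy show "set x \<inter> set y = {}"
      proof (cases "x \<in> P - {p}")
        case True
        then show ?thesis
        proof (cases "y \<in> P - {p}")
          case True
          then show ?thesis using P2 xy \<open>x \<in> P - {p}\<close> by blast
        next
          case False
          then have "set y \<subseteq> set p" using y sAp unfolding P'_def by auto
          then show ?thesis using dx[OF True] by blast
        qed
      next
        case False
        then have xAB: "x = A \<or> x = B" using x unfolding P'_def by auto
        show ?thesis
        proof (cases "y \<in> P - {p}")
          case True
          then show ?thesis using dx[OF True] xAB sAp by blast
        next
          case False
          then have "y = A \<or> y = B" using y unfolding P'_def by auto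
          then show ?thesis using xAB xy AB by auto
        qed
      qed
    qed
    show "verts (verts F, edges F - {e}) = (\<Union>p\<in>P'. set p)"
      using PV pAB pP unfolding P'_def verts_def by auto
    show "edges (verts F, edges F - {e}) = (\<Union>p\<in>P'. path_edges p)"
    proof -
      have "edges F - {e} = (\<Union>q\<in>P - {p}. path_edges q) \<union> path_edges A \<union> path_edges B"
        using PE split eA eB eq pP by auto
      then show ?thesis unfolding P'_def edges_def by auto
    qed
  qed
qed

lemma pair_verts_edges[simp]: "verts (V, E) = V" "edges (V, E) = E"
  by (simp_all add: verts_def edges_def)

lemma lf_remove:
  assumes "finite D"
  shows "linear_forest F \<Longrightarrow> D \<subseteq> edges F \<Longrightarrow> linear_forest (verts F, edges F - D)"
  using assms
proof (induction D rule: finite_induct)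
  case empty
  have "(verts F, edges F) = F" by (simp add: verts_def edges_def)
  then show ?case using empty(1) by (simp only: Diff_empty)
next
  case (insert x D)
  have l: "linear_forest (verts F, edges F - D)" using insert.IH insert.prems by simp
  have xm: "x \<in> edges (verts F, edges F - D)" using insert.prems insert.hyps by simp
  have eq: "edges F - insert x D = edges F - D - {x}" by blast
  from lf_remove1[OF l xm] show ?case unfolding eq pair_verts_edges .
qed

lemma lf_sub:
  assumes "linear_forest F" "E \<subseteq> edges F"
  shows "linear_forest (verts F, E)"
proof -
  have g: "graph F" using assms(1) unfolding linear_forest_def by simp
  have "finite (edges F - E)" using graph_fin_edges[OF g] by simp
  from lf_remove[OF this assms(1)] have "linear_forest (verts F, edges F - (edges F - E))" by simp
  moreover have "edges F - (edges F - E) = E" using assms(2) by auto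
  ultimately show ?thesis by simp
qed

lemma path_edges_single: "path_edges [x] = {}"
  unfolding path_edges_def by simp

lemma path_edges_two: "path_edges [u, v] = {{u, v}}"
  unfolding path_edges_def by auto

lemma lf_add:
  assumes lf: "linear_forest F" and uv: "u \<noteq> v"
    and du: "\<forall>e\<in>edges F. u \<notin> e" and dv: "\<forall>e\<in>edges F. v \<notin> e"
  shows "linear_forest (verts F \<union> {u, v}, insert {u, v} (edges F))"
proof -
  from lf obtain P where gF: "graph F" and P1: "\<forall>p\<in>P. p \<noteq> [] \<and> distinct p"
    and P2: "\<forall>p\<in>P. \<forall>q\<in>P. p \<noteq> q \<longrightarrow> set p \<inter> set q = {}"
    and PV: "verts F = (\<Union>p\<in>P. set p)" and PE: "edges F = (\<Union>p\<in>P. path_edges p)"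
    by (rule lfE)
  have single: "p = [w]" if pP: "p \<in> P" and wp: "w \<in> set p" and dw: "\<forall>e\<in>edges F. w \<notin> e" for p w
  proof -
    have ne: "p \<noteq> []" using P1 pP by simp
    have "length p \<le> 1"
    proof (rule ccontr)
      assume "\<not> length p \<le> 1"
      then have len: "2 \<le> length p" by simp
      from wp obtain j where j: "j < length p" and pj: "p ! j = w" by (auto simp: in_set_conv_nth)
      show False
      proof (cases "Suc j < length p")
        case True
        have "{p!j, p!Suc j} \<in> edges F" using path_edgesI[OF True] PE pP by auto
        then show False using dw pj by auto
      next
        case False
        then have jj: "j = Suc (j - 1)" "Suc (j - 1) < length p" using j len by auto
        have "{p!(j-1), p!Suc (j-1)} \<in> edges F" using path_edgesI[OF jj(2)] PE pP by auto
        then have "{p!(j-1), p!j} \<in> edges F" using jj(1) by metis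
        then show False using dw pj by auto
      qed
    qed
    then show ?thesis using ne wp by (cases p) auto
  qed
  define P' where "P' = (P - {[u], [v]}) \<union> {[u, v]}"
  have notuv: "set x \<inter> {u, v} = {}" if "x \<in> P - {[u], [v]}" for x
  proof -
    have "u \<notin> set x"
    proof
      assume "u \<in> set x" then have "x = [u]" using single[of x u] that du by simp
      then show False using that by simp
    qed
    moreover have "v \<notin> set x"
    proof
      assume "v \<in> set x" then have "x = [v]" using single[of x v] that dv by simp
      then show False using that by simp
    qed
    ultimately show ?thesis by simp
  qed
  show ?thesis unfolding linear_forest_def
  proof (intro conjI exI[of _ P'])
    show "graph (verts F \<union> {u, v}, insert {u, v} (edges F))"
      unfolding graph_def pair_verts_edges
    proof (intro conjI ballI)
      show "finite (verts F \<union> {u, v})" using gF unfolding graph_def by simp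
      fix e assume e: "e \<in> insert {u, v} (edges F)"
      show "\<exists>a b. a \<noteq> b \<and> e = {a, b} \<and> a \<in> verts F \<union> {u, v} \<and> b \<in> verts F \<union> {u, v}"
      proof (cases "e = {u, v}")
        case True
        then show ?thesis using uv by auto
      next
        case False
        then have "e \<in> edges F" using e by simp
        then obtain a b where "a \<noteq> b" "e = {a, b}" "a \<in> verts F" "b \<in> verts F"
          using gF unfolding graph_def by meson
        then show ?thesis by auto
      qed
    qed
    show "\<forall>p\<in>P'. p \<noteq> [] \<and> distinct p" using P1 uv unfolding P'_def by auto
    show "\<forall>x\<in>P'. \<forall>y\<in>P'. x \<noteq> y \<longrightarrow> set x \<inter> set y = {}"
    proof (intro ballI impI)
      fix x y assume x: "x \<in> P'" and y: "y \<in> P'" and xy: "x \<noteq> y"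
      show "set x \<inter> set y = {}"
      proof (cases "x = [u, v]")
        case True
        then have "y \<in> P - {[u], [v]}" using y xy unfolding P'_def by auto
        then show ?thesis using notuv True by auto
      next
        case False
        then have xP: "x \<in> P - {[u], [v]}" using x unfolding P'_def by auto
        show ?thesis
        proof (cases "y = [u, v]")
          case True
          then show ?thesis using notuv[OF xP] by auto
        next
          case False
          then have "y \<in> P" using y unfolding P'_def by auto
          then show ?thesis using P2 xP xy by auto
        qed
      qed
    qed
    show "verts (verts F \<union> {u, v}, insert {u, v} (edges F)) = (\<Union>p\<in>P'. set p)"
    proof -
      have "(\<Union>p\<in>P'. set p) = (\<Union>p\<in>P - {[u], [v]}. set p) \<union> {u, v}"
        unfolding P'_def by auto
      also have "\<dots> = (\<Union>p\<in>P. set p) \<union> {u, v}" by auto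
      finally show ?thesis using PV by simp
    qed
    show "edges (verts F \<union> {u, v}, insert {u, v} (edges F)) = (\<Union>p\<in>P'. path_edges p)"
    proof -
      have "(\<Union>p\<in>P'. path_edges p) = (\<Union>p\<in>P - {[u], [v]}. path_edges p) \<union> {{u, v}}"
        unfolding P'_def by (auto simp: path_edges_two)
      also have "\<dots> = (\<Union>p\<in>P. path_edges p) \<union> {{u, v}}" by (auto simp: path_edges_single)
      finally show ?thesis using PE by simp
    qed
  qed
qed

lemma main_ind:
  assumes gG: "graph G" and gH: "graph H"
    and deg: "\<forall>v\<in>verts H. degree H v \<le> d \<and> degree G v \<le> d"
    and k: "k \<ge> 4 * d + 1"
    and lf: "\<forall>i<k. linear_forest (F i)"
    and cov: "covers_edges k F G"
    and S: "finite S" "S \<subseteq> edges H"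
  shows "\<exists>F'. (\<forall>i<k. linear_forest (F' i)) \<and>
    (\<forall>i<k. \<forall>j<k. i \<noteq> j \<longrightarrow> edges (F' i) \<inter> edges (F' j) = {}) \<and>
    (\<forall>i<k. edges (F' i) \<subseteq> edges G \<union> S) \<and>
    (\<forall>e\<in>edges G \<union> S. \<exists>i<k. e \<in> edges (F' i))"
  using S
proof (induction S rule: finite_induct)
  case empty
  define F0 where "F0 i = (verts (F i), {e \<in> edges (F i) \<inter> edges G. \<forall>j<i. e \<notin> edges (F j)})" for i
  show ?case
  proof (intro exI[of _ F0] conjI allI impI ballI)
    fix i assume i: "i < k"
    show "linear_forest (F0 i)" unfolding F0_def using lf_sub[of "F i"] lf i by auto
  next
    fix i j assume i: "i < k" and j: "j < k" and ij: "i \<noteq> j"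
    show "edges (F0 i) \<inter> edges (F0 j) = {}"
    proof (cases "i < j")
      case True then show ?thesis unfolding F0_def by auto
    next
      case False then have "j < i" using ij by simp
      then show ?thesis unfolding F0_def by auto
    qed
  next
    fix i assume "i < k"
    show "edges (F0 i) \<subseteq> edges G \<union> {}" unfolding F0_def by auto
  next
    fix e assume e: "e \<in> edges G \<union> {}"
    then obtain i where i: "i < k" "e \<in> edges (F i)" using cov unfolding covers_edges_def by auto
    define i0 where "i0 = (LEAST i. e \<in> edges (F i))"
    have i0: "e \<in> edges (F i0)" unfolding i0_def using i(2) by (rule LeastI)
    have i0le: "i0 \<le> i" unfolding i0_def using i(2) by (rule Least_le)
    have i0min: "\<forall>j<i0. e \<notin> edges (F j)" unfolding i0_def using not_less_Least by blast
    have "e \<in> edges (F0 i0)" unfolding F0_def using i0 i0min e by simp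
    moreover have "i0 < k" using i0le i by simp
    ultimately show "\<exists>i<k. e \<in> edges (F0 i)" by blast
  qed
next
  case (insert x S)
  then obtain F' where lf': "\<forall>i<k. linear_forest (F' i)"
    and dj: "\<forall>i<k. \<forall>j<k. i \<noteq> j \<longrightarrow> edges (F' i) \<inter> edges (F' j) = {}"
    and sub: "\<forall>i<k. edges (F' i) \<subseteq> edges G \<union> S"
    and cv: "\<forall>e\<in>edges G \<union> S. \<exists>i<k. e \<in> edges (F' i)"
    by auto
  have xH: "x \<in> edges H" and SH: "S \<subseteq> edges H" using insert.prems by auto
  obtain u v where uv: "u \<noteq> v" "x = {u, v}" "u \<in> verts H" "v \<in> verts H"
    using gH xH unfolding graph_def by meson
  show ?case
  proof (cases "\<exists>i<k. x \<in> edges (F' i)")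
    case True
    show ?thesis
    proof (intro exI[of _ F'] conjI)
      show "\<forall>i<k. linear_forest (F' i)" by fact
      show "\<forall>i<k. \<forall>j<k. i \<noteq> j \<longrightarrow> edges (F' i) \<inter> edges (F' j) = {}" by fact
      show "\<forall>i<k. edges (F' i) \<subseteq> edges G \<union> insert x S" using sub by auto
      show "\<forall>e\<in>edges G \<union> insert x S. \<exists>i<k. e \<in> edges (F' i)" using cv True by auto
    qed
  next
    case False
    have "\<exists>i<k. \<forall>e\<in>edges (F' i). u \<notin> e \<and> v \<notin> e"
    proof (rule ccontr)
      assume "\<not> (\<exists>i<k. \<forall>e\<in>edges (F' i). u \<notin> e \<and> v \<notin> e)"
      then have "\<forall>i. \<exists>e. i < k \<longrightarrow> e \<in> edges (F' i) \<and> (u \<in> e \<or> v \<in> e)" by auto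
      then obtain f where f: "\<And>i. i < k \<Longrightarrow> f i \<in> edges (F' i) \<and> (u \<in> f i \<or> v \<in> f i)"
        by metis
      define T where "T = {e \<in> edges G. u \<in> e} \<union> {e \<in> edges G. v \<in> e} \<union>
        {e \<in> edges H. u \<in> e} \<union> {e \<in> edges H. v \<in> e}"
      have fT: "f ` {..<k} \<subseteq> T"
      proof
        fix y assume "y \<in> f ` {..<k}"
        then obtain i where i: "i < k" "y = f i" by auto
        have "y \<in> edges G \<union> S" using f[OF i(1)] sub i by auto
        then have "y \<in> edges G \<union> edges H" using SH by auto
        then show "y \<in> T" unfolding T_def using f[OF i(1)] i(2) by auto
      qed
      have inj: "inj_on f {..<k}"
      proof (rule inj_onI)
        fix i j assume i: "i \<in> {..<k}" and j: "j \<in> {..<k}" and fij: "f i = f j"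
        show "i = j"
        proof (rule ccontr)
          assume "i \<noteq> j"
          then have "edges (F' i) \<inter> edges (F' j) = {}" using dj i j by auto
          moreover have "f i \<in> edges (F' i)" "f j \<in> edges (F' j)" using f i j by auto
          ultimately show False using fij by auto
        qed
      qed
      have finG: "finite (edges G)" by (rule graph_fin_edges[OF gG])
      have finH: "finite (edges H)" by (rule graph_fin_edges[OF gH])
      have finT: "finite T" unfolding T_def using finG finH by auto
      have c1: "card {e \<in> edges G. u \<in> e} \<le> d" using deg uv unfolding degree_def by auto
      have c2: "card {e \<in> edges G. v \<in> e} \<le> d" using deg uv unfolding degree_def by auto
      have c3: "card {e \<in> edges H. u \<in> e} \<le> d" using deg uv unfolding degree_def by auto
      have c4: "card {e \<in> edges H. v \<in> e} \<le> d" using deg uv unfolding degree_def by auto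
      have "card T \<le> card {e \<in> edges G. u \<in> e} + card {e \<in> edges G. v \<in> e} +
        card {e \<in> edges H. u \<in> e} + card {e \<in> edges H. v \<in> e}"
        unfolding T_def by (meson card_Un_le le_trans add_le_mono order_refl)
      then have cT: "card T \<le> 4 * d" using c1 c2 c3 c4 by linarith
      have "k = card (f ` {..<k})" using card_image[OF inj] by simp
      also have "\<dots> \<le> card T" using card_mono[OF finT fT] .
      finally show False using cT k by linarith
    qed
    then obtain i where i: "i < k" and free: "\<forall>e\<in>edges (F' i). u \<notin> e \<and> v \<notin> e" by blast
    define F'' where "F'' = F'(i := (verts (F' i) \<union> {u, v}, insert {u, v} (edges (F' i))))"
    have Fi: "edges (F'' i) = insert x (edges (F' i))" unfolding F''_def using uv by simp
    have Fj: "F'' j = F' j" if "j \<noteq> i" for j unfolding F''_def using that by simp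
    have xnot: "x \<notin> edges (F' j)" if "j < k" for j using False that by auto
    show ?thesis
    proof (intro exI[of _ F''] conjI allI impI ballI)
      fix j assume j: "j < k"
      show "linear_forest (F'' j)"
      proof (cases "j = i")
        case True
        have "linear_forest (verts (F' i) \<union> {u, v}, insert {u, v} (edges (F' i)))"
          using lf_add[of "F' i" u v] lf' i uv(1) free by auto
        then show ?thesis unfolding F''_def using True by simp
      next
        case False then show ?thesis using Fj lf' j by simp
      qed
    next
      fix j l assume j: "j < k" and l: "l < k" and jl: "j \<noteq> l"
      show "edges (F'' j) \<inter> edges (F'' l) = {}"
      proof (cases "j = i")
        case True
        then have "l \<noteq> i" using jl by simp
        then show ?thesis using True Fi Fj dj xnot j l jl by auto
      next
        case False
        show ?thesis
        proof (cases "l = i")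
          case True
          then show ?thesis using False Fi Fj dj xnot j l jl by auto
        next
          case False
          then show ?thesis using \<open>j \<noteq> i\<close> Fj dj j l jl by auto
        qed
      qed
    next
      fix j assume j: "j < k"
      show "edges (F'' j) \<subseteq> edges G \<union> insert x S"
      proof (cases "j = i")
        case True then show ?thesis using Fi sub i by auto
      next
        case False then show ?thesis using Fj sub j by auto
      qed
    next
      fix e assume e: "e \<in> edges G \<union> insert x S"
      show "\<exists>j<k. e \<in> edges (F'' j)"
      proof (cases "e = x")
        case True then show ?thesis using Fi i by auto
      next
        case False
        then obtain j where j: "j < k" "e \<in> edges (F' j)" using cv e by auto
        show ?thesis
        proof (cases "j = i")
          case True then show ?thesis using Fi j by auto
        next
          case False then show ?thesis using Fj j by auto
        qed
      qed
    qed
  qed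
qed

theorem lemma3p1:
  fixes G H :: "'a graph" and d k :: nat and F :: "nat \<Rightarrow> 'a graph"
  assumes "graph G" and "graph H"
    and "\<forall>v\<in>verts H. degree H v \<le> d \<and> degree G v \<le> d"
    and "k \<ge> 4 * d + 1"
    and "\<forall>i<k. linear_forest (F i)"
    and "covers_edges k F G"
  shows "\<exists>F' :: nat \<Rightarrow> 'a graph. (\<forall>i<k. linear_forest (F' i)) \<and>
           covers_edges k F' (graph_union G H)"
proof -
  have fin: "finite (edges H)" by (rule graph_fin_edges[OF assms(2)])
  from main_ind[OF assms fin order_refl] obtain F' where
    a: "\<forall>i<k. linear_forest (F' i)" and b: "\<forall>e\<in>edges G \<union> edges H. \<exists>i<k. e \<in> edges (F' i)"
    by blast
  have "edges (graph_union G H) = edges G \<union> edges H" unfolding graph_union_def by simp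
  then have "covers_edges k F' (graph_union G H)" unfolding covers_edges_def using b by simp
  then show ?thesis using a by blast
qed

end
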